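(* Let $n\ge3$. For every $r\in[3,n]$, the ideal $\tilde{\mathfrak b}_r$ is an atom of $\mathrm{Mon}(R)$.
   Context: Let $K$ be a field, $N\ge2$, $R=K[X_1,\dots,X_N]$, $X=X_1$, $Y=X_2$. $\mathrm{Mon}(R)$ is the monoid of nonzero monomial ideals of $R$ under ideal multiplication, with identity $R$ (its only unit); an atom of $\mathrm{Mon}(R)$ is an $I\ne R$ in $\mathrm{Mon}(R)$ not a product of two elements of $\mathrm{Mon}(R)\setminus\{R\}$. $[x,y]=\{z\in\mathbb Z:x\le z\le y\}$. For $i\in\mathbb N^+$, $\mathfrak b_i=\langle X^i,Y^i\rangle$. Fix an integer $n\ge 3$ and positive integers $a_1,\dots,a_{n+1}$ with (C1) $a_{n+1}=a_1+\dots+a_{n-1}+2a_n$ and (C2) $a_{i+1}>2(a_1+\dots+a_i)$ for all $i\in[1,n-1]$. For $I\subseteq[1,n+1]$ put $a_I=\sum_{i\in I}a_i$ ($a_\emptyset=0$). For $r\in[3,n]$, $\tilde{\mathfrak b}_r$ is the ideal generated by $\mathfrak b_{a_1}\mathfrak b_{a_3}\mathfrak b_{a_4}\cdots\mathfrak b_{a_r}$ together with the monomial $X^{a_{[3,r]}-a_2}Y^{a_3-a_2}$. *)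

theory Defs
  imports Main
begin

text \<open>Combinatorial model of monomial ideals of R = K[X_1,...,X_N].
  A monomial X_1^{e_1}...X_N^{e_N} is encoded by its exponent vector
  e :: nat => nat, with e i = 0 for i outside {1..N}.  A monomial ideal is
  determined by the set of monomials it contains (a monomial ideal is the
  K-span of its monomials, independently of the field K); nonzero monomial
  ideals correspond exactly to nonempty subsets of monomials closed under
  multiplication by monomials (upward closed for the componentwise order).\<close>

definition monoms :: "nat \<Rightarrow> (nat \<Rightarrow> nat) set" where
  "monoms N = {e. \<forall>i. i \<notin> {1..N} \<longrightarrow> e i = 0}"

definition gen :: "nat \<Rightarrow> (nat \<Rightarrow> nat) set \<Rightarrow> (nat \<Rightarrow> nat) set" where
  "gen N G = {m \<in> monoms N. \<exists>g\<in>G. g \<le> m}"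

definition mon_ideal :: "nat \<Rightarrow> (nat \<Rightarrow> nat) set \<Rightarrow> bool" where
  "mon_ideal N I \<longleftrightarrow> I \<subseteq> monoms N \<and> I \<noteq> {} \<and>
     (\<forall>a\<in>I. \<forall>b\<in>monoms N. a \<le> b \<longrightarrow> b \<in> I)"

abbreviation unit_ideal :: "nat \<Rightarrow> (nat \<Rightarrow> nat) set" where
  "unit_ideal N \<equiv> monoms N"

definition imul :: "nat \<Rightarrow> (nat \<Rightarrow> nat) set \<Rightarrow> (nat \<Rightarrow> nat) set \<Rightarrow> (nat \<Rightarrow> nat) set" where
  "imul N I J = gen N {(\<lambda>k. a k + b k) | a b. a \<in> I \<and> b \<in> J}"

definition iprod :: "nat \<Rightarrow> (nat \<Rightarrow> nat) set list \<Rightarrow> (nat \<Rightarrow> nat) set" where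
  "iprod N Is = foldr (imul N) Is (unit_ideal N)"

definition is_atom :: "nat \<Rightarrow> (nat \<Rightarrow> nat) set \<Rightarrow> bool" where
  "is_atom N I \<longleftrightarrow> mon_ideal N I \<and> I \<noteq> unit_ideal N \<and>
     \<not> (\<exists>J L. mon_ideal N J \<and> mon_ideal N L \<and> J \<noteq> unit_ideal N \<and>
             L \<noteq> unit_ideal N \<and> I = imul N J L)"

text \<open>The monomial X^i Y^j, with X = X_1, Y = X_2.\<close>
definition xy :: "nat \<Rightarrow> nat \<Rightarrow> (nat \<Rightarrow> nat)" where
  "xy i j = (\<lambda>k. if k = 1 then i else if k = 2 then j else 0)"

definition bb :: "nat \<Rightarrow> nat \<Rightarrow> (nat \<Rightarrow> nat) set" where
  "bb N i = gen N {xy i 0, xy 0 i}"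

definition bt :: "nat \<Rightarrow> (nat \<Rightarrow> nat) \<Rightarrow> nat \<Rightarrow> (nat \<Rightarrow> nat) set" where
  "bt N a r = gen N (iprod N (bb N (a 1) # map (\<lambda>i. bb N (a i)) [3..<r+1])
       \<union> {xy ((\<Sum>i=3..r. a i) - a 2) (a 3 - a 2)})"

end

theory Submission
  imports Defs
begin


fun splits :: "nat list \<Rightarrow> (nat \<times> nat) set" where
  "splits [] = {(0,0)}"
| "splits (c#cs) = (\<lambda>(x,y). (x+c,y)) ` splits cs \<union> (\<lambda>(x,y). (x,y+c)) ` splits cs"

fun dset :: "nat list \<Rightarrow> int set" where
  "dset [] = {0}"
| "dset (c#cs) = (\<lambda>d. d - int c) ` dset cs \<union> dset cs \<union> (\<lambda>d. d + int c) ` dset cs"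

lemma splits_sum: "(x,y) \<in> splits cs \<Longrightarrow> x + y = sum_list cs"
  by (induction cs arbitrary: x y) auto

lemma splits_swap: "(x,y) \<in> splits cs \<Longrightarrow> (y,x) \<in> splits cs"
  by (induction cs arbitrary: x y) force+

lemma splits_zero: "(0, sum_list cs) \<in> splits cs"
  by (induction cs) force+

lemma splits_diff: "(x,y) \<in> splits cs \<Longrightarrow> (x',y') \<in> splits cs \<Longrightarrow> int x' - int x \<in> dset cs"
proof (induction cs arbitrary: x y x' y')
  case Nil thus ?case by auto
next
  case (Cons c cs)
  from Cons.prems(1) obtain x0 y0 where A: "(x0,y0) \<in> splits cs" "x = x0 + c \<or> x = x0"
    by auto
  from Cons.prems(2) obtain x1 y1 where B: "(x1,y1) \<in> splits cs" "x' = x1 + c \<or> x' = x1"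
    by auto
  have H: "int x1 - int x0 \<in> dset cs" using Cons.IH A B by blast
  show ?case using A(2) B(2)
  proof (elim disjE)
    assume "x = x0 + c" "x' = x1 + c" thus ?thesis using H by simp
  next
    assume "x = x0" "x' = x1" thus ?thesis using H by simp
  next
    assume "x = x0 + c" "x' = x1"
    hence "int x' - int x = (int x1 - int x0) - int c" by simp
    thus ?thesis using H by simp
  next
    assume "x = x0" "x' = x1 + c"
    hence "int x' - int x = (int x1 - int x0) + int c" by simp
    thus ?thesis using H by simp
  qed
qed

lemma dset_Cons_iff: "z \<in> dset (c # cs) \<longleftrightarrow> (\<exists>d\<in>dset cs. \<exists>s\<in>{-1,0,1::int}. z = d + s * int c)"
proof -
  have e: "(\<exists>s\<in>{-1,0,1::int}. z = d + s * int c) \<longleftrightarrow> z = d - int c \<or> z = d \<or> z = d + int c" for d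
    by auto
  show ?thesis unfolding e dset.simps image_iff Un_iff by blast
qed

declare dset.simps(2)[simp del]

lemma dset_snoc: "z \<in> dset (cs @ [c]) \<longleftrightarrow> (\<exists>d\<in>dset cs. \<exists>s\<in>{-1,0,1::int}. z = d + s * int c)"
proof (induction cs arbitrary: z)
  case Nil thus ?case by (auto simp: dset_Cons_iff)
next
  case (Cons x cs)
  show ?case
  proof
    assume "z \<in> dset ((x # cs) @ [c])"
    then obtain d s where d: "d \<in> dset (cs @ [c])" "s \<in> {-1,0,1::int}" "z = d + s * int x"
      unfolding append_Cons dset_Cons_iff by blast
    then obtain d0 t where d0: "d0 \<in> dset cs" "t \<in> {-1,0,1::int}" "d = d0 + t * int c"
      using Cons.IH by blast
    have "d0 + s * int x \<in> dset (x # cs)" using d0(1) d(2) unfolding dset_Cons_iff by blast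
    moreover have "z = (d0 + s * int x) + t * int c" using d d0 by simp
    ultimately show "\<exists>d\<in>dset (x # cs). \<exists>s\<in>{-1,0,1::int}. z = d + s * int c" using d0(2) by blast
  next
    assume "\<exists>d\<in>dset (x # cs). \<exists>s\<in>{-1,0,1::int}. z = d + s * int c"
    then obtain d t where d: "d \<in> dset (x # cs)" "t \<in> {-1,0,1::int}" "z = d + t * int c"
      by blast
    then obtain d0 s where d0: "d0 \<in> dset cs" "s \<in> {-1,0,1::int}" "d = d0 + s * int x"
      unfolding dset_Cons_iff by blast
    have "d0 + t * int c \<in> dset (cs @ [c])" using Cons.IH d0(1) d(2) by blast
    moreover have "z = (d0 + t * int c) + s * int x" using d d0 by simp
    ultimately show "z \<in> dset ((x # cs) @ [c])" using d0(2) 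
      unfolding append_Cons dset_Cons_iff by blast
  qed
qed

lemma dset_bound: "d \<in> dset cs \<Longrightarrow> \<bar>d\<bar> \<le> int (sum_list cs)"
proof (induction cs arbitrary: d)
  case Nil thus ?case by simp
next
  case (Cons c cs)
  then obtain d0 s where h: "d0 \<in> dset cs" "s \<in> {-1,0,1::int}" "d = d0 + s * int c"
    unfolding dset_Cons_iff by blast
  have i: "\<bar>d0\<bar> \<le> int (sum_list cs)" using Cons.IH h(1) by blast
  have "s = -1 \<or> s = 0 \<or> s = 1" using h(2) by simp
  then show ?case using i h(3) by (elim disjE; simp; arith)
qed

lemma xy_le: "xy i j \<le> e \<longleftrightarrow> i \<le> e 1 \<and> j \<le> e 2"
proof
  assume "xy i j \<le> e"
  then have "xy i j 1 \<le> e 1" "xy i j 2 \<le> e 2" by (auto simp: le_fun_def)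
  then show "i \<le> e 1 \<and> j \<le> e 2" by (simp add: xy_def)
next
  assume "i \<le> e 1 \<and> j \<le> e 2"
  then show "xy i j \<le> e" by (auto simp: le_fun_def xy_def)
qed

lemma monoms_xy: "N \<ge> 2 \<Longrightarrow> xy i j \<in> monoms N"
  unfolding monoms_def xy_def by auto

lemma imul_iff: "e \<in> imul N I J \<longleftrightarrow> e \<in> monoms N \<and> (\<exists>a\<in>I. \<exists>b\<in>J. (\<lambda>k. a k + b k) \<le> e)"
  unfolding imul_def gen_def by blast

lemma bb_iff: "N \<ge> 2 \<Longrightarrow> e \<in> bb N c \<longleftrightarrow> e \<in> monoms N \<and> (c \<le> e 1 \<or> c \<le> e 2)"
  unfolding bb_def gen_def by (auto simp: xy_le)



lemma sum_cs: "sum_list (map a [3..<r+1]) = (\<Sum>i=3..r. a i)"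
proof -
  have "set [3..<r+1] = {3..r}" by auto
  then show ?thesis by (simp only: interv_sum_list_conv_sum_set_nat)
qed

lemma iprod_bb:
  assumes N2: "N \<ge> 2"
  shows "iprod N (map (bb N) cs) = {e \<in> monoms N. \<exists>(x,y)\<in>splits cs. x \<le> e 1 \<and> y \<le> e 2}"
proof (induction cs)
  case Nil show ?case by (auto simp: iprod_def)
next
  case (Cons c cs)
  have eq: "iprod N (map (bb N) (c#cs)) = imul N (bb N c) (iprod N (map (bb N) cs))"
    by (simp add: iprod_def)
  show ?case
  proof (rule set_eqI, rule iffI)
    fix e assume "e \<in> iprod N (map (bb N) (c # cs))"
    then obtain g b where g: "g \<in> bb N c" and b: "b \<in> iprod N (map (bb N) cs)"
      and le: "(\<lambda>k. g k + b k) \<le> e" and em: "e \<in> monoms N"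
      unfolding eq imul_iff by blast
    from b obtain x y where xy: "(x,y) \<in> splits cs" "x \<le> b 1" "y \<le> b 2"
      unfolding Cons.IH by blast
    from le have l1: "g 1 + b 1 \<le> e 1" and l2: "g 2 + b 2 \<le> e 2" by (auto simp: le_fun_def)
    from g have "c \<le> g 1 \<or> c \<le> g 2" using bb_iff[OF N2] by blast
    then show "e \<in> {e \<in> monoms N. \<exists>(x,y)\<in>splits (c#cs). x \<le> e 1 \<and> y \<le> e 2}"
    proof
      assume "c \<le> g 1"
      then have "(x+c, y) \<in> splits (c#cs)" "x + c \<le> e 1" "y \<le> e 2" using xy l1 l2 by force+
      then show ?thesis using em by blast
    next
      assume "c \<le> g 2"
      then have "(x, y+c) \<in> splits (c#cs)" "x \<le> e 1" "y + c \<le> e 2" using xy l1 l2 by force+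
      then show ?thesis using em by blast
    qed
  next
    fix e assume "e \<in> {e \<in> monoms N. \<exists>(x,y)\<in>splits (c#cs). x \<le> e 1 \<and> y \<le> e 2}"
    then obtain x' y' where em: "e \<in> monoms N" and s: "(x',y') \<in> splits (c#cs)" "x' \<le> e 1" "y' \<le> e 2"
      by blast
    from s(1) obtain x y where xy: "(x,y) \<in> splits cs" "(x' = x + c \<and> y' = y) \<or> (x' = x \<and> y' = y + c)"
      by auto
    from xy(2) show "e \<in> iprod N (map (bb N) (c # cs))"
    proof (elim disjE conjE)
      assume h: "x' = x + c" "y' = y"
      define b where "b = (\<lambda>k. e k - xy c 0 k)"
      have g: "xy c 0 \<in> bb N c" using bb_iff[OF N2] monoms_xy[OF N2] by (simp add: xy_def)
      have bm: "b \<in> monoms N" using em by (auto simp: b_def monoms_def xy_def)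
      have "b 1 = e 1 - c" "b 2 = e 2" by (simp_all add: b_def xy_def)
      hence "x \<le> b 1 \<and> y \<le> b 2" using s h by simp
      hence bi: "b \<in> iprod N (map (bb N) cs)" unfolding Cons.IH using xy(1) bm by blast
      have "(\<lambda>k. xy c 0 k + b k) \<le> e" using s h by (auto simp: le_fun_def b_def xy_def)
      then show ?thesis unfolding eq imul_iff using em g bi by blast
    next
      assume h: "x' = x" "y' = y + c"
      define b where "b = (\<lambda>k. e k - xy 0 c k)"
      have g: "xy 0 c \<in> bb N c" using bb_iff[OF N2] monoms_xy[OF N2] by (simp add: xy_def)
      have bm: "b \<in> monoms N" using em by (auto simp: b_def monoms_def xy_def)
      have "b 1 = e 1" "b 2 = e 2 - c" by (simp_all add: b_def xy_def)
      hence "x \<le> b 1 \<and> y \<le> b 2" using s h by simp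
      hence bi: "b \<in> iprod N (map (bb N) cs)" unfolding Cons.IH using xy(1) bm by blast
      have "(\<lambda>k. xy 0 c k + b k) \<le> e" using s h by (auto simp: le_fun_def b_def xy_def)
      then show ?thesis unfolding eq imul_iff using em g bi by blast
    qed
  qed
qed

lemma bt_iff:
  assumes N2: "N \<ge> 2"
  shows "e \<in> bt N a r \<longleftrightarrow> e \<in> monoms N \<and>
    ((\<exists>(x,y)\<in>splits (a 1 # map a [3..<r+1]). x \<le> e 1 \<and> y \<le> e 2) \<or>
     ((\<Sum>i=3..r. a i) - a 2 \<le> e 1 \<and> a 3 - a 2 \<le> e 2))"
proof -
  have P: "iprod N (bb N (a 1) # map (\<lambda>i. bb N (a i)) [3..<r+1]) =
     {e \<in> monoms N. \<exists>(x,y)\<in>splits (a 1 # map a [3..<r+1]). x \<le> e 1 \<and> y \<le> e 2}"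
    using iprod_bb[OF N2, of "a 1 # map a [3..<r+1]"] by (simp add: comp_def)
  show ?thesis
  proof
    assume "e \<in> bt N a r"
    then obtain g where em: "e \<in> monoms N" and g: "g \<in> iprod N (bb N (a 1) # map (\<lambda>i. bb N (a i)) [3..<r+1])
       \<union> {xy ((\<Sum>i=3..r. a i) - a 2) (a 3 - a 2)}" and ge: "g \<le> e"
      unfolding bt_def gen_def by blast
    from ge have g12: "g 1 \<le> e 1" "g 2 \<le> e 2" by (auto simp: le_fun_def)
    from g show "e \<in> monoms N \<and>
    ((\<exists>(x,y)\<in>splits (a 1 # map a [3..<r+1]). x \<le> e 1 \<and> y \<le> e 2) \<or>
     ((\<Sum>i=3..r. a i) - a 2 \<le> e 1 \<and> a 3 - a 2 \<le> e 2))"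
    proof
      assume "g \<in> iprod N (bb N (a 1) # map (\<lambda>i. bb N (a i)) [3..<r+1])"
      then obtain x y where xy1: "(x,y) \<in> splits (a 1 # map a [3..<r+1])" and xy2: "x \<le> g 1" "y \<le> g 2"
        unfolding P by blast
      have "x \<le> e 1 \<and> y \<le> e 2" using g12 xy2 by linarith
      then have "\<exists>(x,y)\<in>splits (a 1 # map a [3..<r+1]). x \<le> e 1 \<and> y \<le> e 2" using xy1 by blast
      then show ?thesis using em by blast
    next
      assume "g \<in> {xy ((\<Sum>i=3..r. a i) - a 2) (a 3 - a 2)}"
      then show ?thesis using em ge by (simp add: xy_le)
    qed
  next
    assume h: "e \<in> monoms N \<and>
    ((\<exists>(x,y)\<in>splits (a 1 # map a [3..<r+1]). x \<le> e 1 \<and> y \<le> e 2) \<or>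
     ((\<Sum>i=3..r. a i) - a 2 \<le> e 1 \<and> a 3 - a 2 \<le> e 2))"
    then show "e \<in> bt N a r"
    proof (elim conjE disjE)
      assume "e \<in> monoms N" "\<exists>(x,y)\<in>splits (a 1 # map a [3..<r+1]). x \<le> e 1 \<and> y \<le> e 2"
      then have "e \<in> iprod N (bb N (a 1) # map (\<lambda>i. bb N (a i)) [3..<r+1])" unfolding P by blast
      then show ?thesis using \<open>e \<in> monoms N\<close> unfolding bt_def gen_def by blast
    next
      assume "e \<in> monoms N" "(\<Sum>i=3..r. a i) - a 2 \<le> e 1" "a 3 - a 2 \<le> e 2"
      then show ?thesis unfolding bt_def gen_def by (auto simp: xy_le)
    qed
  qed
qed



lemma sum12: "r \<ge> 2 \<Longrightarrow> (\<Sum>j=1..r. a j) = a 1 + a 2 + (\<Sum>j=3..r. (a::nat\<Rightarrow>nat) j)"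
  using sum.atLeast_Suc_atMost[of 1 r a] sum.atLeast_Suc_atMost[of 2 r a]
  by (simp add: numeral_2_eq_2 numeral_3_eq_3)

lemma sum3: "r \<ge> 3 \<Longrightarrow> a 3 \<le> (\<Sum>j=3..r. (a::nat\<Rightarrow>nat) j)"
  using sum.atLeast_Suc_atMost[of 3 r a] by simp

lemma inv_lemma:
  fixes a :: "nat \<Rightarrow> nat"
  assumes pos: "\<forall>i\<in>{1..n+1}. a i > 0"
    and C2: "\<forall>i\<in>{1..n-1}. a (i+1) > 2 * (\<Sum>j=1..i. a j)"
    and r3: "3 \<le> r" and rn: "r \<le> n"
  shows "\<forall>d\<in>dset (a 1 # map a [3..<r+1]). (d = - int (a 1) \<or> d = 0 \<or> d = int (a 1)) \<or> int (a 3) - int (a 1) \<le> \<bar>d\<bar>"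
  using r3 rn
proof (induction r rule: nat_induct_at_least)
  case base
  have a1: "a 1 > 0" using pos base by simp
  have "2 \<in> {1..n-1}" using base by simp
  then have "a (2+1) > 2 * (\<Sum>j=1..2. a j)" by (rule bspec[OF C2])
  moreover have "{1..2::nat} = {1,2}" by auto
  ultimately have a3: "a 3 > 2 * (a 1 + a 2)" by simp
  show ?case
  proof
    fix d assume d: "d \<in> dset (a 1 # map a [3..<3+1])"
    have eq: "a 1 # map a [3..<3+1] = [a 1, a 3]" by simp
    from d have "d \<in> dset [a 1, a 3]" unfolding eq .
    then have "\<exists>d1\<in>dset [a 3]. \<exists>s\<in>{-1,0,1::int}. d = d1 + s * int (a 1)"
      by (simp only: dset_Cons_iff)
    then obtain d1 s where h1: "d1 \<in> dset [a 3]" "s \<in> {-1,0,1::int}" "d = d1 + s * int (a 1)"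
      by blast
    from h1(1) have "\<exists>d2\<in>dset []. \<exists>t\<in>{-1,0,1::int}. d1 = d2 + t * int (a 3)"
      by (simp only: dset_Cons_iff)
    then obtain d2 t where h2: "d2 \<in> dset []" "t \<in> {-1,0,1::int}" "d1 = d2 + t * int (a 3)"
      by blast
    have h: "s \<in> {-1,0,1::int}" "t \<in> {-1,0,1::int}" "d = t * int (a 3) + s * int (a 1)"
      using h1 h2 by auto
    have "s = -1 \<or> s = 0 \<or> s = 1" "t = -1 \<or> t = 0 \<or> t = 1" using h by auto
    then show "(d = - int (a 1) \<or> d = 0 \<or> d = int (a 1)) \<or> int (a 3) - int (a 1) \<le> \<bar>d\<bar>"
      using h(3) a1 a3 by (elim disjE; simp; arith)
  qed
next
  case (Suc r)
  have IH: "\<forall>d\<in>dset (a 1 # map a [3..<r+1]). (d = - int (a 1) \<or> d = 0 \<or> d = int (a 1)) \<or> int (a 3) - int (a 1) \<le> \<bar>d\<bar>"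
    using Suc by simp
  have list: "a 1 # map a [3..<Suc r + 1] = (a 1 # map a [3..<r+1]) @ [a (Suc r)]"
    using Suc(1) by simp
  have "r \<in> {1..n-1}" using Suc by simp
  then have "a (r+1) > 2 * (\<Sum>j=1..r. a j)" by (rule bspec[OF C2])
  then have h1: "2 * (a 1 + a 2 + (\<Sum>j=3..r. a j)) < a (Suc r)" using sum12[of r a] Suc(1) by simp
  have h2: "a 3 \<le> (\<Sum>j=3..r. a j)" using sum3 Suc(1) by simp
  have sl: "sum_list (a 1 # map a [3..<r+1]) = a 1 + (\<Sum>j=3..r. a j)" using sum_cs[of a r] by simp
  show ?case
  proof
    fix d assume "d \<in> dset (a 1 # map a [3..<Suc r+1])"
    then have "\<exists>d0\<in>dset (a 1 # map a [3..<r+1]). \<exists>s\<in>{-1,0,1::int}. d = d0 + s * int (a (Suc r))"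
      unfolding list by (simp only: dset_snoc)
    then obtain d0 s where h: "d0 \<in> dset (a 1 # map a [3..<r+1])" "s \<in> {-1,0,1::int}" "d = d0 + s * int (a (Suc r))"
      by blast
    have b: "\<bar>d0\<bar> \<le> int (a 1) + int (\<Sum>j=3..r. a j)" using dset_bound[OF h(1)] sl by simp
    have "int (2 * (a 1 + a 2 + (\<Sum>j=3..r. a j))) < int (a (Suc r))" using h1 by (simp only: of_nat_less_iff)
    then have h1': "2 * (int (a 1) + int (a 2) + int (\<Sum>j=3..r. a j)) < int (a (Suc r))" by simp
    have h2': "int (a 3) \<le> int (\<Sum>j=3..r. a j)" using h2 by (simp only: of_nat_le_iff)
    have "s = -1 \<or> s = 0 \<or> s = 1" using h by auto
    then show "(d = - int (a 1) \<or> d = 0 \<or> d = int (a 1)) \<or> int (a 3) - int (a 1) \<le> \<bar>d\<bar>"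
    proof (elim disjE)
      assume "s = 0" then show ?thesis using IH h by simp
    next
      assume "s = 1" then show ?thesis using h(3) b h1' h2' by simp arith
    next
      assume "s = -1" then show ?thesis using h(3) b h1' h2' by simp arith
    qed
  qed
qed

lemma comb: "N \<ge> 2 \<Longrightarrow> xy p q \<in> I \<Longrightarrow> xy p' q' \<in> J \<Longrightarrow> xy (p+p') (q+q') \<in> imul N I J"
  unfolding imul_iff by (intro conjI monoms_xy bexI[of _ "xy p q"] bexI[of _ "xy p' q'"])
    (auto simp: le_fun_def xy_def)

lemma decomp:
  assumes N2: "N \<ge> 2" and I: "mon_ideal N I" and J: "mon_ideal N J" and m: "xy p q \<in> imul N I J"
  shows "\<exists>p1 q1 p2 q2. xy p1 q1 \<in> I \<and> xy p2 q2 \<in> J \<and> p1 + p2 = p \<and> q1 + q2 = q"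
proof -
  from m obtain g h where g: "g \<in> I" and h: "h \<in> J" and le: "(\<lambda>k. g k + h k) \<le> xy p q"
    unfolding imul_iff by blast
  have le': "g k + h k \<le> xy p q k" for k using le by (auto simp: le_fun_def)
  have "g \<le> xy (g 1) (g 2)"
  proof (rule le_funI)
    fix k show "g k \<le> xy (g 1) (g 2) k" using le'[of k] by (auto simp: xy_def)
  qed
  then have gI: "xy (g 1) (g 2) \<in> I" using I g monoms_xy[OF N2] unfolding mon_ideal_def by blast
  have "h \<le> xy (p - g 1) (q - g 2)"
  proof (rule le_funI)
    fix k show "h k \<le> xy (p - g 1) (q - g 2) k" using le'[of k] by (auto simp: xy_def)
  qed
  then have hJ: "xy (p - g 1) (q - g 2) \<in> J" using J h monoms_xy[OF N2] unfolding mon_ideal_def by blast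
  have "g 1 \<le> p" "g 2 \<le> q" using le'[of 1] le'[of 2] by (auto simp: xy_def)
  then show ?thesis using gI hJ by (intro exI[of _ "g 1"] exI[of _ "g 2"] exI[of _ "p - g 1"] exI[of _ "q - g 2"]) auto
qed

lemma xy12[simp]: "xy p q 1 = p" "xy p q 2 = q" by (simp_all add: xy_def)



lemma arith_cases:
  fixes U T V D a1 a2 a3 e1 e2 j1 j2 l1 l2 :: nat
  assumes "U + a2 = T" "V + a2 = a3" "2*a1 < a2" "2*(a1+a2) < a3" "D = a1 + T" "0<a1"
    "e1+e2 = D" "j1+l1 = U" "j2+l2 = V"
   and "D \<le> j1 + e2 \<or> (a1 \<le> j2 \<and> D \<le> j1+e2+a1) \<or> (V \<le> j2 \<and> U \<le> j1+e2)"
   and "D \<le> e1 + l1 \<or> (a1 \<le> l2 \<and> D \<le> e1+l1+a1) \<or> (V \<le> l2 \<and> U \<le> e1+l1)"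
  shows "(j2 = 0 \<and> l2 = V \<and> l1 + e1 = U) \<or> (l2 = 0 \<and> j2 = V \<and> j1 + e2 = U)"
proof -
  have a3': "2*a1 + 2*a2 < a3" using assms(4) by simp
  note h = assms(1-9) a3'
  from assms(10) consider (A) "D \<le> j1+e2" | (B) "a1 \<le> j2" "D \<le> j1+e2+a1" | (C) "V \<le> j2" "U \<le> j1+e2"
    by blast
  then show ?thesis
  proof cases
    case A
    from assms(11) consider (A') "D \<le> e1+l1" | (B') "a1 \<le> l2" "D \<le> e1+l1+a1" | (C') "V \<le> l2" "U \<le> e1+l1"
      by blast
    then show ?thesis
    proof cases
      case A' have False using A A' h by linarith thus ?thesis ..
    next
      case B' have False using A B' h by linarith thus ?thesis ..
    next
      case C' have "j2 = 0 \<and> l2 = V \<and> l1 + e1 = U" using A C' h by (intro conjI; linarith)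
      thus ?thesis ..
    qed
  next
    case B
    from assms(11) consider (A') "D \<le> e1+l1" | (B') "a1 \<le> l2" "D \<le> e1+l1+a1" | (C') "V \<le> l2" "U \<le> e1+l1"
      by blast
    then show ?thesis
    proof cases
      case A' have False using B A' h by linarith thus ?thesis ..
    next
      case B' have False using B B' h by linarith thus ?thesis ..
    next
      case C' have False using B C' h by linarith thus ?thesis ..
    qed
  next
    case C
    from assms(11) consider (A') "D \<le> e1+l1" | (B') "a1 \<le> l2" "D \<le> e1+l1+a1" | (C') "V \<le> l2" "U \<le> e1+l1"
      by blast
    then show ?thesis
    proof cases
      case A' have "l2 = 0 \<and> j2 = V \<and> j1 + e2 = U" using C A' h by (intro conjI; linarith)
      thus ?thesis ..
    next
      case B' have False using C B' h by linarith thus ?thesis ..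
    next
      case C' have False using C C' h by linarith thus ?thesis ..
    qed
  qed
qed

lemma xy1s[simp]: "xy p q (Suc 0) = p" by (simp add: xy_def)

theorem theorem4p7:
  fixes N n r :: nat and a :: "nat \<Rightarrow> nat"
  assumes "N \<ge> 2" and "n \<ge> 3"
    and "\<forall>i\<in>{1..n+1}. a i > 0"
    and "a (n+1) = (\<Sum>i=1..n-1. a i) + 2 * a n"
    and "\<forall>i\<in>{1..n-1}. a (i+1) > 2 * (\<Sum>j=1..i. a j)"
    and "r \<in> {3..n}"
  shows "is_atom N (bt N a r)"
proof -
  note N2 = assms(1) and n3 = assms(2) and pos = assms(3) and C2 = assms(5)
  have r3: "3 \<le> r" and rn: "r \<le> n" using assms(6) by auto
  have a1: "0 < a 1" using pos n3 by simp
  have "1 \<in> {1..n-1}" using n3 by simp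
  then have "a (1+1) > 2 * (\<Sum>j=1..1. a j)" by (rule bspec[OF C2])
  then have a2: "2 * a 1 < a 2" by (simp add: numeral_2_eq_2)
  have "2 \<in> {1..n-1}" using n3 by simp
  then have "a (2+1) > 2 * (\<Sum>j=1..2. a j)" by (rule bspec[OF C2])
  moreover have "{1..2::nat} = {1,2}" by auto
  ultimately have a3: "2 * (a 1 + a 2) < a 3" by simp
  define cs where "cs = a 1 # map a [3..<r+1]"
  define T where "T = (\<Sum>i=3..r. a i)"
  have T3: "a 3 \<le> T" unfolding T_def using sum3 r3 by blast
  define D where "D = a 1 + T"
  have sumcs: "sum_list cs = D" unfolding cs_def D_def T_def using sum_cs[of a r] by simp
  define U where "U = T - a 2"
  define V where "V = a 3 - a 2"
  have UT: "U + a 2 = T" unfolding U_def using T3 a3 by arith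
  have VV: "V + a 2 = a 3" unfolding V_def using a3 by arith
  have btI: "e \<in> bt N a r \<longleftrightarrow> e \<in> monoms N \<and> ((\<exists>(x,y)\<in>splits cs. x \<le> e 1 \<and> y \<le> e 2) \<or> (U \<le> e 1 \<and> V \<le> e 2))" for e
    unfolding cs_def U_def V_def T_def by (rule bt_iff[OF N2])
  have inv: "\<forall>d\<in>dset cs. (d = - int (a 1) \<or> d = 0 \<or> d = int (a 1)) \<or> int (a 3) - int (a 1) \<le> \<bar>d\<bar>"
    unfolding cs_def by (rule inv_lemma[OF pos C2 r3 rn])
  have z0: "(0, D) \<in> splits cs" using splits_zero[of cs] sumcs by simp
  have zD: "(D, 0) \<in> splits cs" using splits_swap[OF z0] .
  have psum: "p + q = D" if "(p,q) \<in> splits cs" for p q using splits_sum[OF that] sumcs by simp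
  have F2: "q = 0 \<or> q = a 1" if pq: "(p,q) \<in> splits cs" and qV: "q \<le> V" for p q
  proof -
    have "int q - int 0 \<in> dset cs" using splits_diff[OF z0 splits_swap[OF pq]] .
    then have "int q \<in> dset cs" by simp
    then have "(int q = - int (a 1) \<or> int q = 0 \<or> int q = int (a 1)) \<or> int (a 3) - int (a 1) \<le> \<bar>int q\<bar>"
      by (rule bspec[OF inv])
    moreover have "int q \<le> int V" using qV by simp
    moreover have "int V + int (a 2) = int (a 3)" using VV by (simp only: of_nat_add[symmetric])
    moreover have "int (2 * a 1) < int (a 2)" using a2 by (simp only: of_nat_less_iff)
    ultimately show ?thesis using a1 by auto
  qed
  have F3: False if pq: "(p,q) \<in> splits cs" and pq': "(p',q') \<in> splits cs"
     and l: "p + a 1 + a 2 \<le> p'" and u: "p' \<le> p + V" for p q p' q'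
  proof -
    have "int p' - int p \<in> dset cs" using splits_diff[OF pq pq'] .
    then have "(int p' - int p = - int (a 1) \<or> int p' - int p = 0 \<or> int p' - int p = int (a 1)) \<or> int (a 3) - int (a 1) \<le> \<bar>int p' - int p\<bar>"
      by (rule bspec[OF inv])
    moreover have "int p + int (a 1) + int (a 2) \<le> int p'" using l by (simp only: of_nat_add[symmetric] of_nat_le_iff)
    moreover have "int p' \<le> int p + int V" using u by (simp only: of_nat_add[symmetric] of_nat_le_iff)
    moreover have "int V + int (a 2) = int (a 3)" using VV by (simp only: of_nat_add[symmetric])
    moreover have "int (2 * a 1) < int (a 2)" using a2 by (simp only: of_nat_less_iff)
    ultimately show False using a1 by auto
  qed
  have UVD: "D < U + V" unfolding D_def using UT VV a3 a1 by arith
  have deg: "D \<le> e 1 + e 2" if "e \<in> bt N a r" for e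
  proof -
    from that have "(\<exists>(x,y)\<in>splits cs. x \<le> e 1 \<and> y \<le> e 2) \<or> (U \<le> e 1 \<and> V \<le> e 2)"
      using btI by blast
    then show ?thesis
    proof
      assume "\<exists>(x,y)\<in>splits cs. x \<le> e 1 \<and> y \<le> e 2"
      then obtain x y where "(x,y) \<in> splits cs" "x \<le> e 1" "y \<le> e 2" by blast
      then show ?thesis using psum[of x y] by linarith
    next
      assume "U \<le> e 1 \<and> V \<le> e 2" then show ?thesis using UVD by linarith
    qed
  qed
  have low: "D \<le> x \<or> (a 1 \<le> y \<and> D \<le> x + a 1) \<or> (V \<le> y \<and> U \<le> x)"
    if xyb: "xy x y \<in> bt N a r" and yV: "y \<le> V" for x y
  proof -
    from xyb have "(\<exists>(p,q)\<in>splits cs. p \<le> x \<and> q \<le> y) \<or> (U \<le> x \<and> V \<le> y)"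
      using btI[of "xy x y"] by simp
    then show ?thesis
    proof
      assume "\<exists>(p,q)\<in>splits cs. p \<le> x \<and> q \<le> y"
      then obtain p q where pq: "(p,q) \<in> splits cs" "p \<le> x" "q \<le> y" by blast
      have "q = 0 \<or> q = a 1" using F2[OF pq(1)] pq(3) yV by linarith
      then show ?thesis using psum[OF pq(1)] pq by auto
    next
      assume "U \<le> x \<and> V \<le> y" then show ?thesis by blast
    qed
  qed
  have xybt: "xy x y \<in> bt N a r" if "(x,y) \<in> splits cs" for x y
    using btI[of "xy x y"] that monoms_xy[OF N2] by auto
  have bt_mon: "mon_ideal N (bt N a r)"
    unfolding mon_ideal_def
  proof (intro conjI ballI impI)
    show "bt N a r \<subseteq> monoms N" using btI by blast
    show "bt N a r \<noteq> {}" using xybt[OF zD] by blast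
  next
    fix e f assume e: "e \<in> bt N a r" and f: "f \<in> monoms N" and ef: "e \<le> f"
    have "e 1 \<le> f 1" "e 2 \<le> f 2" using ef by (auto simp: le_fun_def)
    moreover have "(\<exists>(x,y)\<in>splits cs. x \<le> e 1 \<and> y \<le> e 2) \<or> (U \<le> e 1 \<and> V \<le> e 2)"
      using e btI by blast
    ultimately have "(\<exists>(x,y)\<in>splits cs. x \<le> f 1 \<and> y \<le> f 2) \<or> (U \<le> f 1 \<and> V \<le> f 2)"
      by fastforce
    then show "f \<in> bt N a r" using btI f by blast
  qed
  have Dpos: "0 < D" unfolding D_def using a1 by simp
  have bt_ne: "bt N a r \<noteq> monoms N"
  proof
    assume h: "bt N a r = monoms N"
    have "(\<lambda>k. 0::nat) \<in> monoms N" by (simp add: monoms_def)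
    then have "(\<lambda>k. 0::nat) \<in> bt N a r" using h by simp
    then show False using deg Dpos by fastforce
  qed
  have zero_le: "xy 0 0 \<le> f" for f by (simp add: xy_le)
  have proper: "0 < p" if I: "mon_ideal N I" and Iu: "I \<noteq> monoms N" and m: "xy p 0 \<in> I" for I p
  proof (rule ccontr)
    assume "\<not> 0 < p"
    then have "xy 0 0 \<in> I" using m by simp
    then have "monoms N \<subseteq> I" using I zero_le unfolding mon_ideal_def by blast
    then show False using I Iu unfolding mon_ideal_def by blast
  qed
  show ?thesis
    unfolding is_atom_def
  proof (intro conjI bt_mon bt_ne notI)
    assume "\<exists>J L. mon_ideal N J \<and> mon_ideal N L \<and> J \<noteq> monoms N \<and> L \<noteq> monoms N \<and> bt N a r = imul N J L"
    then obtain J L where J: "mon_ideal N J" and L: "mon_ideal N L" and Ju: "J \<noteq> monoms N"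
      and Lu: "L \<noteq> monoms N" and BT: "bt N a r = imul N J L" by blast
    have cmb: "xy (p+p') (q+q') \<in> bt N a r" if "xy p q \<in> J" "xy p' q' \<in> L" for p q p' q'
      unfolding BT using comb[OF N2 that] .
    have dec: "\<exists>p1 q1 p2 q2. xy p1 q1 \<in> J \<and> xy p2 q2 \<in> L \<and> p1 + p2 = p \<and> q1 + q2 = q"
      if "xy p q \<in> bt N a r" for p q
      using decomp[OF N2 J L] that unfolding BT by blast
    obtain e1 q1 e2 q2 where E: "xy e1 q1 \<in> J" "xy e2 q2 \<in> L" "e1 + e2 = D" "q1 + q2 = 0"
      using dec[OF xybt[OF zD]] by blast
    obtain p1 f1 p2 f2 where F: "xy p1 f1 \<in> J" "xy p2 f2 \<in> L" "p1 + p2 = 0" "f1 + f2 = D"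
      using dec[OF xybt[OF z0]] by blast
    have XJ: "xy e1 0 \<in> J" and XL: "xy e2 0 \<in> L" using E by auto
    have YJ: "xy 0 f1 \<in> J" and YL: "xy 0 f2 \<in> L" using F by auto
    have "D \<le> e1 + f2" using deg[OF cmb[OF XJ YL]] by simp
    moreover have "D \<le> e2 + f1" using deg[OF cmb[OF YJ XL]] by simp
    ultimately have ef: "f1 = e1" "f2 = e2" using E(3) F(4) by linarith+
    have YJ': "xy 0 e1 \<in> J" and YL': "xy 0 e2 \<in> L" using YJ YL ef by simp_all
    have e1p: "0 < e1" using proper[OF J Ju XJ] .
    have e2p: "0 < e2" using proper[OF L Lu XL] .
    have Se: "(e1, e2) \<in> splits cs"
    proof -
      have "xy e1 e2 \<in> bt N a r" using cmb[OF XJ YL'] by simp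
      then have "(\<exists>(p,q)\<in>splits cs. p \<le> e1 \<and> q \<le> e2) \<or> (U \<le> e1 \<and> V \<le> e2)"
        using btI[of "xy e1 e2"] by simp
      then show ?thesis
      proof
        assume "\<exists>(p,q)\<in>splits cs. p \<le> e1 \<and> q \<le> e2"
        then obtain p q where pq: "(p,q) \<in> splits cs" "p \<le> e1" "q \<le> e2" by blast
        have "p = e1" "q = e2" using psum[OF pq(1)] pq E(3) by linarith+
        then show ?thesis using pq by simp
      next
        assume "U \<le> e1 \<and> V \<le> e2" then show ?thesis using UVD E(3) by linarith
      qed
    qed
    have "xy U V \<in> bt N a r" using btI[of "xy U V"] monoms_xy[OF N2] by simp
    then obtain j1 j2 l1 l2 where M: "xy j1 j2 \<in> J" "xy l1 l2 \<in> L" "j1 + l1 = U" "j2 + l2 = V"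
      using dec by blast
    have c1: "xy (j1 + e2) j2 \<in> bt N a r" using cmb[OF M(1) XL] by simp
    have c2: "xy (e1 + l1) l2 \<in> bt N a r" using cmb[OF XJ M(2)] by simp
    have c3: "xy j1 (j2 + e2) \<in> bt N a r" using cmb[OF M(1) YL'] by simp
    have c4: "xy l1 (e1 + l2) \<in> bt N a r" using cmb[OF YJ' M(2)] by simp
    have jV: "j2 \<le> V" and lV: "l2 \<le> V" using M(4) by linarith+
    have l1: "D \<le> j1 + e2 \<or> (a 1 \<le> j2 \<and> D \<le> j1 + e2 + a 1) \<or> (V \<le> j2 \<and> U \<le> j1 + e2)"
      using low[OF c1 jV] .
    have l2: "D \<le> e1 + l1 \<or> (a 1 \<le> l2 \<and> D \<le> e1 + l1 + a 1) \<or> (V \<le> l2 \<and> U \<le> e1 + l1)"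
      using low[OF c2 lV] .
    have ar: "U + a 2 = T" "V + a 2 = a 3" "2 * a 1 < a 2" "2 * (a 1 + a 2) < a 3" "D = a 1 + T"
      "0 < a 1" "0 < e1" "0 < e2" "e1 + e2 = D" "j1 + l1 = U" "j2 + l2 = V"
      using UT VV a2 a3 D_def a1 e1p e2p E(3) M(3,4) by auto
    have cases: "(j2 = 0 \<and> l2 = V \<and> l1 + e1 = U) \<or> (l2 = 0 \<and> j2 = V \<and> j1 + e2 = U)"
      using arith_cases[OF ar(1-6,9-11) l1 l2] .
    then show False
    proof (elim disjE conjE)
      assume h: "j2 = 0" "l2 = V" "l1 + e1 = U"
      have "(\<exists>(p,q)\<in>splits cs. p \<le> l1 \<and> q \<le> e1 + V) \<or> (U \<le> l1 \<and> V \<le> e1 + V)"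
        using btI[of "xy l1 (e1 + l2)"] c4 h by simp
      then show False
      proof
        assume "\<exists>(p,q)\<in>splits cs. p \<le> l1 \<and> q \<le> e1 + V"
        then obtain p q where pq: "(p,q) \<in> splits cs" "p \<le> l1" "q \<le> e1 + V" by blast
        show False
          using F3[OF Se splits_swap[OF pq(1)]] psum[OF pq(1)] pq h UT D_def by linarith
      next
        assume "U \<le> l1 \<and> V \<le> e1 + V" then show False using h e1p by linarith
      qed
    next
      assume h: "l2 = 0" "j2 = V" "j1 + e2 = U"
      have "(\<exists>(p,q)\<in>splits cs. p \<le> j1 \<and> q \<le> e2 + V) \<or> (U \<le> j1 \<and> V \<le> e2 + V)"
        using btI[of "xy j1 (j2 + e2)"] c3 h by (simp add: add.commute)
      then show False
      proof
        assume "\<exists>(p,q)\<in>splits cs. p \<le> j1 \<and> q \<le> e2 + V"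
        then obtain p q where pq: "(p,q) \<in> splits cs" "p \<le> j1" "q \<le> e2 + V" by blast
        show False
          using F3[OF splits_swap[OF Se] splits_swap[OF pq(1)]] psum[OF pq(1)] pq h UT D_def by linarith
      next
        assume "U \<le> j1 \<and> V \<le> e2 + V" then show False using h e2p by linarith
      qed
    qed
  qed
qed

end
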